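(* Let $\{x_i\}_{i\in[N]}$ be the global solution of the delayed consensus system described in the context, let $\beta>0$, and let \[ F(t):=d_x(t)+\beta\int_{\max\{0,t-2\tau\}}^t e^{-(t-s)}\int_s^t\max_{i\in[N]}|\dot x_i(r)|\,\mathrm dr\,\mathrm ds,\qquad t\ge0. \] Let $K$ be the smallest integer such that $K\sigma\ge2\tau$. Then \[ F(t)\le\mathcal{Z}^K_\sigma\Delta^0_x\qquad\text{for all }t\in[0,2\tau], \] where $\mathcal{Z}^K_\sigma:=Z^K_\sigma+Z^{K-1}_\sigma\beta\big(1-(1+2\tau)e^{-2\tau}\big)$.
   Context: Let $N\ge2$, $d\ge1$ be integers, $[N]=\{1,\dots,N\}$, $0\le\sigma\le\tau$. Let $\psi:[0,\infty)\to[0,\infty)$ be continuous, nonincreasing, positive everywhere, with $\sup\psi\le1$. Given $x_i^0\in C([-\tau,0],\mathbb{R}^d)$, $\{x_i\}$ is the global solution (continuous on $[-\tau,\infty)$, continuously differentiable on $[0,\infty)$) of $\dot x_i(t)=\sum_{j\ne i}a_{ij}(t)(x_j(t-\tau)-x_i(t-\sigma))$ for $t>0$, with $a_{ij}(t)=\frac1{N-1}\psi(|x_i(t-\sigma)-x_j(t-\tau)|)$, and $x_i=x_i^0$ on $[-\tau,0]$. $d_x(t):=\max_{i,j}|x_i(t)-x_j(t)|$; $\Delta^0_x:=\max_{i,j}\max_{s,t\in[-\tau,0]}|x_i^0(s)-x_j^0(t)|$. For $k\ge0$, \[ Z^k_\sigma:=\frac{1}{2\sqrt{\sigma(1+\sigma)}}\Big[\big((1+\sigma)+\sqrt{\sigma(1+\sigma)}\big)^{k+1}-\big((1+\sigma)-\sqrt{\sigma(1+\sigma)}\big)^{k+1}\Big],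 \] a polynomial in $\sigma$; equivalently $Z^0_\sigma=1$, $Z^k_\sigma=1+(1+\sigma)Z^{k-1}_\sigma+\sigma\sum_{m=0}^{k-1}Z^m_\sigma$ for $k\ge1$. *)

theory Defs
  imports "HOL-Analysis.Analysis"
begin

text \<open>Z^k_sigma via the (equivalent) recursion; valid also at sigma = 0.\<close>
function Zs :: "real \<Rightarrow> nat \<Rightarrow> real" where
  "Zs \<sigma> 0 = 1"
| "Zs \<sigma> (Suc k) = 1 + (1 + \<sigma>) * Zs \<sigma> k + \<sigma> * (\<Sum>m\<in>{..k}. Zs \<sigma> m)"
  by pat_completeness auto
termination by (relation "Wellfounded.measure snd") auto

definition diam :: "nat \<Rightarrow> (nat \<Rightarrow> real \<Rightarrow> 'a::real_normed_vector) \<Rightarrow> real \<Rightarrow> real" where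
  "diam N x t = Max {norm (x i t - x j t) | i j. i \<in> {1..N} \<and> j \<in> {1..N}}"

definition Delta0 :: "nat \<Rightarrow> real \<Rightarrow> (nat \<Rightarrow> real \<Rightarrow> 'a::real_normed_vector) \<Rightarrow> real" where
  "Delta0 N \<tau> x = Sup {norm (x i s - x j t) | i j s t.
      i \<in> {1..N} \<and> j \<in> {1..N} \<and> s \<in> {-\<tau>..0} \<and> t \<in> {-\<tau>..0}}"

definition rhs :: "nat \<Rightarrow> real \<Rightarrow> real \<Rightarrow> (real \<Rightarrow> real) \<Rightarrow> (nat \<Rightarrow> real \<Rightarrow> 'a::real_normed_vector)
    \<Rightarrow> nat \<Rightarrow> real \<Rightarrow> 'a" where
  "rhs N \<sigma> \<tau> \<psi> x i t = (\<Sum>j\<in>{1..N} - {i}.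
      ((1 / (real N - 1)) * \<psi> (norm (x i (t - \<sigma>) - x j (t - \<tau>)))) *\<^sub>R (x j (t - \<tau>) - x i (t - \<sigma>)))"

definition Ffun :: "nat \<Rightarrow> real \<Rightarrow> real \<Rightarrow> (nat \<Rightarrow> real \<Rightarrow> 'a::real_normed_vector) \<Rightarrow> real \<Rightarrow> real" where
  "Ffun N \<tau> \<beta> x t = diam N x t + \<beta> * integral {max 0 (t - 2*\<tau>)..t}
      (\<lambda>s. exp (-(t - s)) * integral {s..t}
          (\<lambda>r. Max ((\<lambda>i. norm (vector_derivative (x i) (at r))) ` {1..N})))"

end

theory Submission
  imports Defs
begin


lemma Zs_nonneg: "0 \<le> \<sigma> \<Longrightarrow> 0 \<le> Zs \<sigma> k"
proof (induction k rule: less_induct)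
  case (less k)
  show ?case
  proof (cases k)
    case 0 then show ?thesis by simp
  next
    case (Suc n)
    have "0 \<le> (\<Sum>m\<in>{..n}. Zs \<sigma> m)" using less Suc by (intro sum_nonneg) auto
    moreover have "0 \<le> Zs \<sigma> n" using less Suc by auto
    ultimately show ?thesis using Suc less.prems by simp
  qed
qed

lemma Zs_ge: "0 \<le> \<sigma> \<Longrightarrow> (1 + 2*\<sigma>) ^ k \<le> Zs \<sigma> k"
proof (induction k)
  case 0 then show ?case by simp
next
  case (Suc k)
  have "Zs \<sigma> k \<le> (\<Sum>m\<in>{..k}. Zs \<sigma> m)"
    using Zs_nonneg[OF Suc.prems] by (intro member_le_sum) auto
  then have "\<sigma> * Zs \<sigma> k \<le> \<sigma> * (\<Sum>m\<in>{..k}. Zs \<sigma> m)" using Suc.prems by (rule mult_left_mono)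
  moreover have "(1+2*\<sigma>) * (1 + 2*\<sigma>) ^ k \<le> (1+2*\<sigma>) * Zs \<sigma> k"
    using Suc by (intro mult_left_mono) auto
  ultimately show ?case by (simp add: algebra_simps)
qed

lemma rhs_bound:
  fixes x :: "nat \<Rightarrow> real \<Rightarrow> 'a::real_normed_vector"
  assumes N: "N \<ge> 2" and i: "i \<in> {1..N}"
    and psi: "\<And>r. 0 \<le> r \<Longrightarrow> 0 \<le> \<psi> r \<and> \<psi> r \<le> 1"
    and C: "\<And>j. j \<in> {1..N} \<Longrightarrow> norm (x j (t-\<tau>) - x i (t-\<sigma>)) \<le> C"
  shows "norm (rhs N \<sigma> \<tau> \<psi> x i t) \<le> C"
proof -
  have C0: "0 \<le> C" using C[OF i] norm_ge_zero order_trans by blast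
  have N1: "real N - 1 > 0" using N by simp
  have "norm (rhs N \<sigma> \<tau> \<psi> x i t) \<le> (\<Sum>j\<in>{1..N} - {i}.
      norm (((1 / (real N - 1)) * \<psi> (norm (x i (t - \<sigma>) - x j (t - \<tau>)))) *\<^sub>R (x j (t - \<tau>) - x i (t - \<sigma>))))"
    unfolding rhs_def by (rule norm_sum)
  also have "\<dots> \<le> (\<Sum>j\<in>{1..N} - {i}. (1 / (real N - 1)) * C)"
  proof (rule sum_mono)
    fix j assume j: "j \<in> {1..N} - {i}"
    let ?p = "\<psi> (norm (x i (t - \<sigma>) - x j (t - \<tau>)))"
    have p: "0 \<le> ?p" "?p \<le> 1" using psi[of "norm (x i (t - \<sigma>) - x j (t - \<tau>))"] by auto
    have "norm (((1 / (real N - 1)) * ?p) *\<^sub>R (x j (t - \<tau>) - x i (t - \<sigma>)))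
        = (1 / (real N - 1)) * ?p * norm (x j (t - \<tau>) - x i (t - \<sigma>))"
      using p N1 by simp
    also have "\<dots> \<le> (1 / (real N - 1)) * 1 * C"
      using p N1 C[of j] j by (intro mult_mono) auto
    finally show "norm (((1 / (real N - 1)) * ?p) *\<^sub>R (x j (t - \<tau>) - x i (t - \<sigma>))) \<le> (1 / (real N - 1)) * C" by simp
  qed
  also have "\<dots> = C"
  proof -
    have "card ({1..N} - {i}) = N - 1" using i by simp
    then have "real (card ({1..N} - {i})) = real N - 1" using N by simp
    then show ?thesis using N1 by simp
  qed
  finally show ?thesis .
qed



lemma tri3:
  fixes a b c d :: "'a::real_normed_vector"
  shows "norm (a - d) \<le> norm (a - b) + norm (b - c) + norm (c - d)"
proof -
  have "norm (a - d) \<le> norm (a - b) + norm (b - d)" by (rule norm_diff_triangle_ineq[of a b b d, simplified])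
  moreover have "norm (b - d) \<le> norm (b - c) + norm (c - d)" by (rule norm_diff_triangle_ineq[of b c c d, simplified])
  ultimately show ?thesis by simp
qed

lemma deriv_bound:
  fixes x :: "nat \<Rightarrow> real \<Rightarrow> 'a::real_normed_vector"
  assumes N: "N \<ge> 2" and sig: "0 \<le> \<sigma>" "\<sigma> \<le> \<tau>"
    and psi: "\<And>r. 0 \<le> r \<Longrightarrow> 0 \<le> \<psi> r \<and> \<psi> r \<le> 1"
    and S: "\<And>i j s r. i \<in> {1..N} \<Longrightarrow> j \<in> {1..N} \<Longrightarrow> s \<in> {-\<tau>..real k*\<sigma>} \<Longrightarrow> r \<in> {-\<tau>..real k*\<sigma>}
              \<Longrightarrow> norm (x i s - x j r) \<le> C"
    and i: "i \<in> {1..N}" and t: "0 < t" "t \<le> real (Suc k) * \<sigma>"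
  shows "norm (rhs N \<sigma> \<tau> \<psi> x i t) \<le> C"
proof (rule rhs_bound[OF N i psi])
  fix j assume j: "j \<in> {1..N}"
  have k0: "0 \<le> real k * \<sigma>" using sig by simp
  show "norm (x j (t - \<tau>) - x i (t - \<sigma>)) \<le> C"
    using S[OF j i, of "t-\<tau>" "t-\<sigma>"] t sig k0 by (auto simp: algebra_simps)
qed

lemma move_bound:
  fixes f :: "real \<Rightarrow> 'a::real_inner"
  assumes kk: "0 \<le> a" and C0: "0 \<le> C" and sig: "0 \<le> \<sigma>"
    and cont: "continuous_on {a..} f"
    and der: "\<And>t. a < t \<Longrightarrow> (f has_vector_derivative f' t) (at t)"
    and bnd: "\<And>t. a < t \<Longrightarrow> t \<le> a + \<sigma> \<Longrightarrow> norm (f' t) \<le> C"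
    and s: "s \<le> a + \<sigma>"
  shows "norm (f s - f (min s a)) \<le> \<sigma> * C"
proof (cases "s \<le> a")
  case True then show ?thesis using C0 sig by simp
next
  case False
  then have as: "a < s" by simp
  have "\<exists>y\<in>{a<..<s}. norm (f s - f a) \<le> norm ((\<lambda>h. h *\<^sub>R f' y) (s - a))"
  proof -
    have c: "continuous_on {a..s} f" using cont by (rule continuous_on_subset) auto
    have d: "\<And>y. a < y \<Longrightarrow> y < s \<Longrightarrow> (f has_derivative (\<lambda>h. h *\<^sub>R f' y)) (at y)"
      using der by (simp add: has_vector_derivative_def)
    show ?thesis using mvt_general[OF as c d] by simp
  qed
  then obtain y where y: "a < y" "y < s" and le: "norm (f s - f a) \<le> \<bar>s - a\<bar> * norm (f' y)" by auto
  have "\<bar>s - a\<bar> * norm (f' y) \<le> \<sigma> * C"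
    using bnd[of y] y s as by (intro mult_mono) auto
  then show ?thesis using le as by simp
qed



lemma spread:
  fixes x :: "nat \<Rightarrow> real \<Rightarrow> 'a::real_inner"
  assumes N: "N \<ge> 2" and sig: "0 \<le> \<sigma>" "\<sigma> \<le> \<tau>"
    and psi: "\<And>r. 0 \<le> r \<Longrightarrow> 0 \<le> \<psi> r \<and> \<psi> r \<le> 1"
    and x_cont: "\<And>i. i \<in> {1..N} \<Longrightarrow> continuous_on {-\<tau>..} (x i)"
    and x_ode: "\<And>i t. i \<in> {1..N} \<Longrightarrow> 0 < t \<Longrightarrow>
                  (x i has_vector_derivative rhs N \<sigma> \<tau> \<psi> x i t) (at t)"
    and D: "\<And>i j s r. i \<in> {1..N} \<Longrightarrow> j \<in> {1..N} \<Longrightarrow> s \<in> {-\<tau>..0} \<Longrightarrow> r \<in> {-\<tau>..0}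
              \<Longrightarrow> norm (x i s - x j r) \<le> \<Delta>"
  shows "\<And>i j s r. i \<in> {1..N} \<Longrightarrow> j \<in> {1..N} \<Longrightarrow> s \<in> {-\<tau>..real k*\<sigma>} \<Longrightarrow> r \<in> {-\<tau>..real k*\<sigma>}
              \<Longrightarrow> norm (x i s - x j r) \<le> (1+2*\<sigma>)^k * \<Delta>"
proof (induction k)
  case 0 then show ?case using D by simp
next
  case (Suc k)
  have tau0: "0 \<le> \<tau>" using sig by simp
  have D0: "0 \<le> \<Delta>" using D[of 1 1 0 0] N tau0 by simp
  let ?C = "(1+2*\<sigma>)^k * \<Delta>"
  have C0: "0 \<le> ?C" using D0 sig by simp
  have k0: "0 \<le> real k * \<sigma>" using sig by simp
  have mv: "norm (x i s - x i (min s (real k * \<sigma>))) \<le> \<sigma> * ?C"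
    if i: "i \<in> {1..N}" and s: "s \<le> real (Suc k) * \<sigma>" for i s
  proof (rule move_bound[OF k0 C0 sig(1)])
    show "continuous_on {real k * \<sigma>..} (x i)"
      using x_cont[OF i] by (rule continuous_on_subset) (use tau0 k0 in auto)
    show "\<And>t. real k * \<sigma> < t \<Longrightarrow> (x i has_vector_derivative rhs N \<sigma> \<tau> \<psi> x i t) (at t)"
      using x_ode[OF i] k0 by auto
    show "\<And>t. real k * \<sigma> < t \<Longrightarrow> t \<le> real k * \<sigma> + \<sigma> \<Longrightarrow> norm (rhs N \<sigma> \<tau> \<psi> x i t) \<le> ?C"
    proof -
      fix t assume "real k * \<sigma> < t" "t \<le> real k * \<sigma> + \<sigma>"
      moreover have "0 < t" using k0 \<open>real k * \<sigma> < t\<close> by linarith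
      ultimately show "norm (rhs N \<sigma> \<tau> \<psi> x i t) \<le> ?C"
        using deriv_bound[where x=x and \<psi>=\<psi> and k=k and C="?C" and t=t, OF N sig psi Suc.IH i] k0
        by (auto simp: algebra_simps)
    qed
    show "s \<le> real k * \<sigma> + \<sigma>" using s by (simp add: algebra_simps)
  qed
  have "norm (x i s - x j r) \<le> norm (x i s - x i (min s (real k * \<sigma>)))
     + norm (x i (min s (real k * \<sigma>)) - x j (min r (real k * \<sigma>)))
     + norm (x j (min r (real k * \<sigma>)) - x j r)" by (rule tri3)
  also have "\<dots> \<le> \<sigma> * ?C + ?C + \<sigma> * ?C"
  proof (intro add_mono)
    show "norm (x i s - x i (min s (real k * \<sigma>))) \<le> \<sigma> * ?C" using mv[of i s] Suc.prems by auto
    show "norm (x j (min r (real k * \<sigma>)) - x j r) \<le> \<sigma> * ?C"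
      using mv[of j r] Suc.prems by (auto simp: norm_minus_commute)
    show "norm (x i (min s (real k * \<sigma>)) - x j (min r (real k * \<sigma>))) \<le> ?C"
      using Suc.IH[of i j "min s (real k * \<sigma>)" "min r (real k * \<sigma>)"] Suc.prems tau0 k0 by auto
  qed
  also have "\<dots> = (1+2*\<sigma>)^Suc k * \<Delta>" by (simp add: algebra_simps)
  finally show ?case .
qed



lemma g_nonneg: "0 \<le> 1 - (1 + (t::real)) * exp (-t)"
proof -
  have "1 + t \<le> exp t" by (rule exp_ge_add_one_self)
  then have "(1+t) * exp (-t) \<le> exp t * exp (-t)" by (intro mult_right_mono) auto
  then show ?thesis by (simp add: exp_minus_inverse)
qed

lemma g_mono: assumes "0 \<le> t" "t \<le> T"
  shows "1 - (1 + t) * exp (-t) \<le> 1 - (1 + T) * exp (-(T::real))"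
proof -
  have "(\<lambda>u. (1+u) * exp (-u)) t \<ge> (\<lambda>u. (1+u) * exp (-u)) T"
  proof (rule DERIV_nonpos_imp_nonincreasing[OF assms(2)])
    fix u assume u: "t \<le> u" "u \<le> T"
    have "((\<lambda>u. (1+u) * exp (-u)) has_real_derivative (1 * exp (-u) + (1+u) * (exp (-u) * (-1)))) (at u)"
      by (intro derivative_eq_intros) auto
    moreover have "1 * exp (-u) + (1+u) * (exp (-u) * (-1)) \<le> 0"
      using u assms by (simp add: algebra_simps)
    ultimately show "\<exists>y. ((\<lambda>u. (1+u) * exp (-u)) has_real_derivative y) (at u) \<and> y \<le> 0" by blast
  qed
  then show ?thesis by simp
qed

lemma int_bound:
  fixes M :: "real \<Rightarrow> real"
  assumes C0: "0 \<le> C" and t: "0 \<le> t" and M: "\<And>r. 0 < r \<Longrightarrow> r \<le> t \<Longrightarrow> M r \<le> C"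
  shows "integral {0..t} (\<lambda>s. exp (-(t-s)) * integral {s..t} M) \<le> C * (1 - (1+t) * exp (-t))"
proof -
  have inner: "integral {s..t} M \<le> C * (t - s)" if s: "0 \<le> s" "s \<le> t" for s
  proof (cases "M integrable_on {s..t}")
    case True
    let ?g = "\<lambda>r. if r = 0 then 0 else M r"
    have eq: "integral {s..t} M = integral {s..t} ?g"
      by (rule integral_spike[of "{0}"]) auto
    have gi: "?g integrable_on {s..t}"
      by (rule integrable_spike[OF True, of "{0}"]) auto
    have "integral {s..t} ?g \<le> integral {s..t} (\<lambda>r. C)"
      by (rule integral_le[OF gi]) (use M C0 s in auto)
    then show ?thesis using eq s by (simp add: mult.commute)
  next
    case False
    then show ?thesis using C0 s by (simp add: not_integrable_integral)
  qed
  let ?h = "\<lambda>s. C * ((t - s) * exp (-(t-s)))"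
  have hint: "(?h has_integral (C * (1 + t - t) * exp (-(t-t)) - C * (1 + t - 0) * exp (-(t-0)))) {0..t}"
  proof (rule fundamental_theorem_of_calculus[OF t])
    fix s assume "s \<in> {0..t}"
    have "((\<lambda>s. C * (1 + t - s) * exp (-(t-s))) has_real_derivative
        (C * (0 + 0 - 1) * exp (-(t-s)) + C * (1 + t - s) * (exp (-(t-s)) * - (0 - 1)))) (at s)"
      by (intro derivative_eq_intros) auto
    moreover have "C * (0 + 0 - 1) * exp (-(t-s)) + C * (1 + t - s) * (exp (-(t-s)) * - (0 - 1)) = ?h s"
      by (simp add: algebra_simps)
    ultimately show "((\<lambda>s. C * (1 + t - s) * exp (-(t-s))) has_vector_derivative ?h s) (at s within {0..t})"
      by (auto intro: has_field_derivative_imp_has_derivative has_vector_derivative_within_subset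
          simp: has_real_derivative_iff_has_vector_derivative)
  qed
  have hval: "C * (1 + t - t) * exp (-(t-t)) - C * (1 + t - 0) * exp (-(t-0)) = C * (1 - (1+t) * exp (-t))"
    by (simp add: algebra_simps)
  show ?thesis
  proof (cases "(\<lambda>s. exp (-(t-s)) * integral {s..t} M) integrable_on {0..t}")
    case True
    have "integral {0..t} (\<lambda>s. exp (-(t-s)) * integral {s..t} M) \<le> integral {0..t} ?h"
    proof (rule integral_le[OF True])
      show "?h integrable_on {0..t}" using hint by blast
      fix s assume "s \<in> {0..t}"
      then have "exp (-(t-s)) * integral {s..t} M \<le> exp (-(t-s)) * (C * (t - s))"
        using inner by (intro mult_left_mono) auto
      then show "exp (-(t-s)) * integral {s..t} M \<le> ?h s" by (simp add: algebra_simps)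
    qed
    also have "\<dots> = C * (1 - (1+t) * exp (-t))" using hint hval by (metis integral_unique)
    finally show ?thesis .
  next
    case False
    then show ?thesis using C0 g_nonneg[of t] by (simp add: not_integrable_integral)
  qed
qed



theorem lemma3p7:
  fixes N K :: nat and \<sigma> \<tau> \<beta> t :: real and \<psi> :: "real \<Rightarrow> real"
    and x :: "nat \<Rightarrow> real \<Rightarrow> 'a::euclidean_space"
  assumes N: "N \<ge> 2"
    and sig: "0 \<le> \<sigma>" "\<sigma> \<le> \<tau>"
    and psi_cont: "continuous_on {0..} \<psi>"
    and psi_mono: "\<And>a b. 0 \<le> a \<Longrightarrow> a \<le> b \<Longrightarrow> \<psi> b \<le> \<psi> a"
    and psi_pos: "\<And>r. 0 \<le> r \<Longrightarrow> 0 < \<psi> r"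
    and psi_le1: "\<And>r. 0 \<le> r \<Longrightarrow> \<psi> r \<le> 1"
    and x_cont: "\<And>i. i \<in> {1..N} \<Longrightarrow> continuous_on {-\<tau>..} (x i)"
    and x_ode: "\<And>i t. i \<in> {1..N} \<Longrightarrow> 0 < t \<Longrightarrow>
                  (x i has_vector_derivative rhs N \<sigma> \<tau> \<psi> x i t) (at t)"
    and x_C1: "\<And>i. i \<in> {1..N} \<Longrightarrow>
                  continuous_on {0..} (\<lambda>t. vector_derivative (x i) (at t within {0..}))"
    and beta: "\<beta> > 0"
    and K: "real K * \<sigma> \<ge> 2 * \<tau>" "\<And>k. k < K \<Longrightarrow> real k * \<sigma> < 2 * \<tau>"
    and t: "t \<in> {0..2*\<tau>}"
  shows "Ffun N \<tau> \<beta> x t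
           \<le> (Zs \<sigma> K + Zs \<sigma> (K - 1) * \<beta> * (1 - (1 + 2*\<tau>) * exp (-(2*\<tau>)))) * Delta0 N \<tau> x"
proof -
  have tau0: "0 \<le> \<tau>" using sig by simp
  have psi: "\<And>r. 0 \<le> r \<Longrightarrow> 0 \<le> \<psi> r \<and> \<psi> r \<le> 1" using psi_pos psi_le1 by (meson less_imp_le)
  define SD where "SD = {norm (x i s - x j t) | i j s t.
      i \<in> {1..N} \<and> j \<in> {1..N} \<and> s \<in> {-\<tau>..0} \<and> t \<in> {-\<tau>..0}}"
  define \<Delta> where "\<Delta> = Delta0 N \<tau> x"
  have \<Delta>def: "\<Delta> = Sup SD" unfolding \<Delta>_def SD_def Delta0_def by simp
  have "compact (\<Union>i\<in>{1..N}. x i ` {-\<tau>..0})"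
  proof (rule compact_UN)
    fix i assume i: "i \<in> {1..N}"
    show "compact (x i ` {-\<tau>..0})"
      by (rule compact_continuous_image) (use x_cont[OF i] in \<open>auto intro: continuous_on_subset\<close>)
  qed simp
  then obtain B where B: "\<And>y. y \<in> (\<Union>i\<in>{1..N}. x i ` {-\<tau>..0}) \<Longrightarrow> norm y \<le> B"
    using compact_imp_bounded bounded_iff by metis
  have bdd: "bdd_above SD"
  proof (rule bdd_aboveI[where M="2*B"])
    fix z assume "z \<in> SD"
    then obtain i j s r where z: "z = norm (x i s - x j r)" and ij: "i \<in> {1..N}" "j \<in> {1..N}"
      and sr: "s \<in> {-\<tau>..0}" "r \<in> {-\<tau>..0}" unfolding SD_def by blast
    have "norm (x i s) \<le> B" "norm (x j r) \<le> B" using B[of "x i s"] B[of "x j r"] ij sr by (meson UN_I image_eqI)+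
    then show "z \<le> 2 * B" using z norm_triangle_ineq4[of "x i s" "x j r"] by simp
  qed
  have D: "norm (x i s - x j r) \<le> \<Delta>"
    if "i \<in> {1..N}" "j \<in> {1..N}" "s \<in> {-\<tau>..0}" "r \<in> {-\<tau>..0}" for i j s r
    unfolding \<Delta>def by (rule cSup_upper[OF _ bdd]) (use that in \<open>auto simp: SD_def\<close>)
  have D0: "0 \<le> \<Delta>" using D[of 1 1 0 0] N tau0 by simp
  note SP = spread[where x=x and \<psi>=\<psi>, OF N sig psi x_cont x_ode D]
  have tK: "t \<le> real K * \<sigma>" using t K by simp
  define S' where "S' = {norm (x i t - x j t) | i j. i \<in> {1..N} \<and> j \<in> {1..N}}"
  have S'eq: "S' = (\<lambda>(i,j). norm (x i t - x j t)) ` ({1..N} \<times> {1..N})" unfolding S'_def by force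
  have "S' \<noteq> {}" using N unfolding S'eq by auto
  then have "Max S' \<in> S'" using S'eq by (intro Max_in) auto
  then obtain i j where ij: "i \<in> {1..N}" "j \<in> {1..N}" and mx: "Max S' = norm (x i t - x j t)"
    unfolding S'_def by blast
  have diam_le: "diam N x t \<le> (1+2*\<sigma>)^K * \<Delta>"
    unfolding diam_def S'_def[symmetric] mx using SP[where k=K and i=i and j=j and s=t and r=t] ij tK t tau0 by auto
  define Cm where "Cm = (1+2*\<sigma>)^(K-1) * \<Delta>"
  have Cm0: "0 \<le> Cm" unfolding Cm_def using D0 sig by simp
  have Mb: "Max ((\<lambda>i. norm (vector_derivative (x i) (at r))) ` {1..N}) \<le> Cm"
    if r: "0 < r" "r \<le> t" for r
  proof (cases "\<sigma> = 0")
    case True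
    then have "\<tau> = 0" using K(1) tau0 by simp
    then show ?thesis using r t by simp
  next
    case False
    then have sp: "0 < \<sigma>" using sig by simp
    have K1: "K \<ge> 1"
    proof (rule ccontr)
      assume "\<not> K \<ge> 1" then have "K = 0" by simp
      then show False using K(1) sp sig by simp
    qed
    have SK: "Suc (K-1) = K" using K1 by simp
    show ?thesis
    proof (subst Max_le_iff, simp, use N in simp, clarify)
      fix i assume i: "i \<in> {1..N}"
      have "vector_derivative (x i) (at r) = rhs N \<sigma> \<tau> \<psi> x i r"
        using x_ode[OF i r(1)] by (rule vector_derivative_at)
      moreover have "norm (rhs N \<sigma> \<tau> \<psi> x i r) \<le> Cm"
        unfolding Cm_def
        by (rule deriv_bound[where x=x and \<psi>=\<psi> and k="K-1", OF N sig psi SP i r(1)])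
           (use r tK SK in \<open>auto simp del: of_nat_Suc\<close>)
      ultimately show "norm (vector_derivative (x i) (at r)) \<le> Cm" by simp
    qed
  qed
  have lo: "max 0 (t - 2*\<tau>) = 0" using t by simp
  have I: "integral {0..t} (\<lambda>s. exp (-(t-s)) * integral {s..t}
          (\<lambda>r. Max ((\<lambda>i. norm (vector_derivative (x i) (at r))) ` {1..N})))
        \<le> Cm * (1 - (1+t) * exp (-t))"
    by (rule int_bound[OF Cm0]) (use t Mb in auto)
  define c where "c = 1 - (1 + 2*\<tau>) * exp (-(2*\<tau>))"
  have "Cm * (1 - (1+t) * exp (-t)) \<le> Cm * c"
    unfolding c_def using g_mono[of t "2*\<tau>"] t Cm0 by (intro mult_left_mono) auto
  also have "\<dots> \<le> Zs \<sigma> (K-1) * \<Delta> * c"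
    unfolding Cm_def c_def using Zs_ge[OF sig(1), of "K-1"] D0 g_nonneg[of "2*\<tau>"]
    by (intro mult_right_mono) auto
  finally have I2: "integral {0..t} (\<lambda>s. exp (-(t-s)) * integral {s..t}
          (\<lambda>r. Max ((\<lambda>i. norm (vector_derivative (x i) (at r))) ` {1..N})))
        \<le> Zs \<sigma> (K-1) * \<Delta> * c" using I by linarith
  have d2: "diam N x t \<le> Zs \<sigma> K * \<Delta>"
    using diam_le Zs_ge[OF sig(1), of K] D0 by (meson mult_right_mono order_trans)
  have "Ffun N \<tau> \<beta> x t \<le> Zs \<sigma> K * \<Delta> + \<beta> * (Zs \<sigma> (K-1) * \<Delta> * c)"
    unfolding Ffun_def lo using d2 I2 beta by (intro add_mono mult_left_mono) auto
  also have "\<dots> = (Zs \<sigma> K + Zs \<sigma> (K - 1) * \<beta> * c) * \<Delta>" by (simp add: algebra_simps)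
  finally show ?thesis unfolding c_def \<Delta>_def .
qed


end
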